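(* For real $\zeta$, let $f(s)=1/(s+\zeta)$ and $S(s)=\operatorname{diag}(f(s),f(s))$ (a $2\times 2$ symmetric function of McMillan degree $2$ with real coefficients). Then $S$ is a Schur function if and only if $\zeta\ge1$. For every $\zeta\ge1$, $S$ has a symmetric $4\times4$ inner extension of McMillan degree $2$ (with complex coefficients). Moreover, $S$ has a symmetric $4\times4$ inner extension of McMillan degree $2$ with real coefficients if and only if $\zeta=1$.
   Context: $\Pi^+=\{s\in\mathbb C:\operatorname{Re}s>0\}$. A rational $p\times p$ matrix function analytic in $\Pi^+$ is a Schur function if $S(s)S(s)^*\le I_p$ on $\Pi^+$, and inner if moreover $S(i\omega)S(i\omega)^*=I_p$ for all real $\omega$. A $4\times4$ function is an extension of a $2\times2$ function $S$ if its lower-right $2\times2$ block is $S$; it is symmetric if it equals its transpose; it has real coefficients if $\mathcal S(s)=\overline{\mathcal S(\bar s)}$. The McMillan degree is the minimal size of $A$ in a realization $C(sI-A)^{-1}B+D$. *)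

theory Defs
  imports "HOL-Analysis.Analysis"
begin

text \<open>Matrices are represented as functions nat => nat => complex; only the
  entries with indices below the stated dimension are meaningful.\<close>

type_synonym cmat = "nat \<Rightarrow> nat \<Rightarrow> complex"

definition RHP :: "complex set" where
  "RHP = {s. Re s > 0}"

definition mmult :: "nat \<Rightarrow> cmat \<Rightarrow> cmat \<Rightarrow> cmat" where
  "mmult k M N = (\<lambda>i j. \<Sum>l<k. M i l * N l j)"

definition madj :: "cmat \<Rightarrow> cmat" where
  "madj M = (\<lambda>i j. cnj (M j i))"

definition idm :: cmat where
  "idm = (\<lambda>i j. if i = j then 1 else 0)"

definition le_identity :: "nat \<Rightarrow> cmat \<Rightarrow> bool" where
  "le_identity p M \<longleftrightarrow> (\<forall>v :: nat \<Rightarrow> complex.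
      let q = (\<Sum>i<p. \<Sum>j<p. cnj (v i) * (idm i j - M i j) * v j) in q \<in> \<real> \<and> 0 \<le> Re q)"

definition resolvent_ok :: "nat \<Rightarrow> cmat \<Rightarrow> complex \<Rightarrow> bool" where
  "resolvent_ok n A s \<longleftrightarrow> (\<forall>x :: nat \<Rightarrow> complex.
      (\<forall>i<n. (\<Sum>j<n. (s * idm i j - A i j) * x j) = 0) \<longrightarrow> (\<forall>j<n. x j = 0))"

text \<open>(A,B,C,D) with A n x n, B n x p, C p x n, D p x p is a realization of the
  p x p function F: F(s) = C (sI - A)^{-1} B + D as rational functions, i.e. for all
  but finitely many s.  Here X = (sI - A)^{-1} B is characterised as the solution of
  (sI - A) X = B.\<close>
definition realizes :: "nat \<Rightarrow> nat \<Rightarrow> cmat \<Rightarrow> cmat \<Rightarrow> cmat \<Rightarrow> cmat \<Rightarrow> (complex \<Rightarrow> cmat) \<Rightarrow> bool" where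
  "realizes p n A B C D F \<longleftrightarrow>
     finite {s. resolvent_ok n A s \<and>
        \<not> (\<forall>X :: cmat. (\<forall>i<n. \<forall>j<p. (\<Sum>k<n. (s * idm i k - A i k) * X k j) = B i j)
             \<longrightarrow> (\<forall>i<p. \<forall>j<p. F s i j = (\<Sum>k<n. C i k * X k j) + D i j))}"

definition realizable :: "nat \<Rightarrow> nat \<Rightarrow> (complex \<Rightarrow> cmat) \<Rightarrow> bool" where
  "realizable p n F \<longleftrightarrow> (\<exists>A B C D. realizes p n A B C D F)"

definition rational_mfun :: "nat \<Rightarrow> (complex \<Rightarrow> cmat) \<Rightarrow> bool" where
  "rational_mfun p F \<longleftrightarrow> (\<exists>n. realizable p n F)"

definition mcmillan_degree_is :: "nat \<Rightarrow> (complex \<Rightarrow> cmat) \<Rightarrow> nat \<Rightarrow> bool" where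
  "mcmillan_degree_is p F n \<longleftrightarrow> realizable p n F \<and> (\<forall>m<n. \<not> realizable p m F)"

definition schur_fun :: "nat \<Rightarrow> (complex \<Rightarrow> cmat) \<Rightarrow> bool" where
  "schur_fun p F \<longleftrightarrow> rational_mfun p F \<and>
     (\<forall>i<p. \<forall>j<p. (\<lambda>s. F s i j) holomorphic_on RHP) \<and>
     (\<forall>s\<in>RHP. le_identity p (mmult p (F s) (madj (F s))))"

definition inner_fun :: "nat \<Rightarrow> (complex \<Rightarrow> cmat) \<Rightarrow> bool" where
  "inner_fun p F \<longleftrightarrow> schur_fun p F \<and>
     (\<forall>\<omega>::real. \<forall>i<p. \<forall>j<p.
        mmult p (F (\<i> * of_real \<omega>)) (madj (F (\<i> * of_real \<omega>))) i j = idm i j)"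

text \<open>Identities between rational functions hold for all but finitely many s.\<close>
definition symmetric_fun :: "nat \<Rightarrow> (complex \<Rightarrow> cmat) \<Rightarrow> bool" where
  "symmetric_fun p F \<longleftrightarrow> (\<forall>\<^sub>F s in cofinite. \<forall>i<p. \<forall>j<p. F s i j = F s j i)"

definition real_coeffs :: "nat \<Rightarrow> (complex \<Rightarrow> cmat) \<Rightarrow> bool" where
  "real_coeffs p F \<longleftrightarrow> (\<forall>\<^sub>F s in cofinite. \<forall>i<p. \<forall>j<p. F s i j = cnj (F (cnj s) i j))"

definition extends4 :: "(complex \<Rightarrow> cmat) \<Rightarrow> (complex \<Rightarrow> cmat) \<Rightarrow> bool" where
  "extends4 SS S \<longleftrightarrow> (\<forall>\<^sub>F s in cofinite. \<forall>i<2. \<forall>j<2. SS s (i + 2) (j + 2) = S s i j)"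

end

theory Submission
  imports Defs
begin


lemma sum4: "(\<Sum>l<(4::nat). g l) = g 0 + g 1 + g 2 + (g 3 :: 'a::comm_monoid_add)"
  by (simp add: eval_nat_numeral ac_simps)
lemma all4: "(\<forall>i<(4::nat). P i) \<longleftrightarrow> P 0 \<and> P 1 \<and> P 2 \<and> P 3"
  by (auto simp: eval_nat_numeral less_Suc_eq)
definition L4 :: "complex list list \<Rightarrow> cmat" where
  "L4 xs i j = (if i < 4 \<and> j < 4 then xs!i!j else 0)"

definition Dm :: cmat where
  "Dm = L4 [[0,0,1,0],[0,0,0,1],[1,0,0,0],[0,1,0,0]]"
definition Mm :: "complex \<Rightarrow> complex \<Rightarrow> cmat" where
  "Mm z w = L4 [[1, 0, - z, \<i> * w], [0, 1, - \<i> * w, - z], [- z, - \<i> * w, 1, 0], [\<i> * w, - z, 0, 1]]"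
definition Km :: "complex \<Rightarrow> complex \<Rightarrow> cmat" where
  "Km z w = L4 [[z, - \<i> * w, -1, 0], [\<i> * w, z, 0, -1], [-1, 0, z, \<i> * w], [0, -1, - \<i> * w, z]]"

lemma DD: "\<forall>i<4. \<forall>j<4. mmult 4 Dm (madj Dm) i j = idm i j"
  by (simp add: all4 sum4 mmult_def madj_def Dm_def L4_def idm_def)

lemma MD: assumes "cnj z = z" "cnj w = w"
  shows "\<forall>i<4. \<forall>j<4. mmult 4 (Mm z w) (madj Dm) i j = - Km z w i j"
  using assms by (simp add: all4 sum4 mmult_def madj_def Dm_def Mm_def Km_def L4_def)
lemma DM: assumes "cnj z = z" "cnj w = w"
  shows "\<forall>i<4. \<forall>j<4. mmult 4 Dm (madj (Mm z w)) i j = - Km z w i j"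
  using assms by (simp add: all4 sum4 mmult_def madj_def Dm_def Mm_def Km_def L4_def)
lemma MM: assumes "cnj z = z" "cnj w = w" "w * w = z * z - 1"
  shows "\<forall>i<4. \<forall>j<4. mmult 4 (Mm z w) (madj (Mm z w)) i j = 2 * z * Km z w i j"
  using assms by (simp add: all4 sum4 mmult_def madj_def Mm_def Km_def L4_def algebra_simps)
lemma KK: assumes "w * w = z * z - 1"
  shows "\<forall>i<4. \<forall>j<4. mmult 4 (Km z w) (Km z w) i j = 2 * z * Km z w i j"
  using assms by (simp add: all4 sum4 mmult_def Km_def L4_def algebra_simps)
lemma Kherm: assumes "cnj z = z" "cnj w = w"
  shows "\<forall>i<4. \<forall>j<4. Km z w i j = cnj (Km z w j i)"
  using assms by (simp add: all4 Km_def L4_def)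



lemma G1:
  fixes D M K :: cmat and f c :: complex
  assumes DD: "\<forall>i<n. \<forall>j<n. mmult n D (madj D) i j = idm i j"
    and MD: "\<forall>i<n. \<forall>j<n. mmult n M (madj D) i j = - K i j"
    and DM: "\<forall>i<n. \<forall>j<n. mmult n D (madj M) i j = - K i j"
    and MM: "\<forall>i<n. \<forall>j<n. mmult n M (madj M) i j = c * K i j"
    and ij: "i < n" "j < n"
  shows "idm i j - mmult n (\<lambda>i j. D i j + f * M i j) (madj (\<lambda>i j. D i j + f * M i j)) i j
       = (f + cnj f - f * cnj f * c) * K i j"
proof -
  have "mmult n (\<lambda>i j. D i j + f * M i j) (madj (\<lambda>i j. D i j + f * M i j)) i j
     = mmult n D (madj D) i j + f * mmult n M (madj D) i j + cnj f * mmult n D (madj M) i j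
       + f * cnj f * mmult n M (madj M) i j"
  proof -
    have "\<And>l. (D i l + f * M i l) * cnj (D j l + f * M j l)
       = D i l * cnj (D j l) + f * (M i l * cnj (D j l)) + cnj f * (D i l * cnj (M j l))
         + f * cnj f * (M i l * cnj (M j l))"
      by (simp add: algebra_simps)
    then show ?thesis
      unfolding mmult_def madj_def
      by (simp only: sum.distrib sum_distrib_left[symmetric])
  qed
  also have "\<dots> = idm i j - f * K i j - cnj f * K i j + f * cnj f * c * K i j"
    using DD MD DM MM ij by simp
  finally show ?thesis by (simp add: algebra_simps)
qed



lemma G2:
  fixes K :: cmat and c :: real and v :: "nat \<Rightarrow> complex"
  assumes herm: "\<forall>i<n. \<forall>j<n. K i j = cnj (K j i)"
    and KK: "\<forall>i<n. \<forall>j<n. mmult n K K i j = of_real c * K i j"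
    and c: "c > 0"
  shows "(\<Sum>i<n. \<Sum>j<n. cnj (v i) * K i j * v j)
        = of_real ((\<Sum>l<n. (cmod (\<Sum>j<n. K l j * v j))^2) / c)"
proof -
  have A: "K i j = (\<Sum>l<n. K i l * K l j) / of_real c" if "i < n" "j < n" for i j
  proof -
    have "(\<Sum>l<n. K i l * K l j) = of_real c * K i j" using KK that unfolding mmult_def by simp
    then show ?thesis using c by simp
  qed
  have "(\<Sum>i<n. \<Sum>j<n. cnj (v i) * K i j * v j)
      = (\<Sum>i<n. \<Sum>j<n. (\<Sum>l<n. cnj (v i) * K i l * K l j * v j) / of_real c)"
  proof (intro sum.cong refl)
    fix i j assume "i \<in> {..<n}" "j \<in> {..<n}"
    then have "K i j = (\<Sum>l<n. K i l * K l j) / of_real c" by (intro A) auto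
    then show "cnj (v i) * K i j * v j = (\<Sum>l<n. cnj (v i) * K i l * K l j * v j) / of_real c"
      by (simp add: sum_distrib_left sum_distrib_right sum_divide_distrib mult.assoc)
  qed
  also have "\<dots> = (\<Sum>i<n. \<Sum>j<n. \<Sum>l<n. cnj (v i) * K i l * K l j * v j) / of_real c"
    by (simp add: sum_divide_distrib)
  also have "(\<Sum>i<n. \<Sum>j<n. \<Sum>l<n. cnj (v i) * K i l * K l j * v j)
      = (\<Sum>l<n. (\<Sum>i<n. cnj (v i) * K i l) * (\<Sum>j<n. K l j * v j))"
  proof -
    have "(\<Sum>i<n. \<Sum>j<n. \<Sum>l<n. cnj (v i) * K i l * K l j * v j)
        = (\<Sum>i<n. \<Sum>l<n. \<Sum>j<n. cnj (v i) * K i l * K l j * v j)"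
      by (rule sum.cong[OF refl], rule sum.swap)
    also have "\<dots> = (\<Sum>l<n. \<Sum>i<n. \<Sum>j<n. cnj (v i) * K i l * K l j * v j)"
      by (rule sum.swap)
    also have "\<dots> = (\<Sum>l<n. (\<Sum>i<n. cnj (v i) * K i l) * (\<Sum>j<n. K l j * v j))"
      by (rule sum.cong[OF refl]) (simp add: sum_product mult.assoc)
    finally show ?thesis .
  qed
  also have "\<dots> = (\<Sum>l<n. cnj (\<Sum>j<n. K l j * v j) * (\<Sum>j<n. K l j * v j))"
  proof (intro sum.cong refl)
    fix l assume l: "l \<in> {..<n}"
    have "(\<Sum>i<n. cnj (v i) * K i l) = cnj (\<Sum>j<n. K l j * v j)"
    proof -
      have "(\<Sum>i<n. cnj (v i) * K i l) = (\<Sum>i<n. cnj (K l i * v i))"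
      proof (rule sum.cong[OF refl])
        fix i assume "i \<in> {..<n}"
        then have "K i l = cnj (K l i)" using herm l by blast
        then show "cnj (v i) * K i l = cnj (K l i * v i)" by (simp add: mult.commute)
      qed
      then show ?thesis by simp
    qed
    then show "(\<Sum>i<n. cnj (v i) * K i l) * (\<Sum>j<n. K l j * v j) = cnj (\<Sum>j<n. K l j * v j) * (\<Sum>j<n. K l j * v j)"
      by simp
  qed
  also have "\<dots> = of_real (\<Sum>l<n. (cmod (\<Sum>j<n. K l j * v j))^2)"
    unfolding of_real_sum by (rule sum.cong[OF refl]) (simp only: complex_norm_square mult.commute)
  finally show ?thesis by simp
qed


lemma sum2: "(\<Sum>l<(2::nat). g l) = g 0 + (g 1 :: 'a::comm_monoid_add)"
  by (simp add: eval_nat_numeral ac_simps)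
lemma all2: "(\<forall>i<(2::nat). P i) \<longleftrightarrow> P 0 \<and> P 1"
  by (auto simp: eval_nat_numeral less_Suc_eq)
lemma CB: assumes "w * w = z * z - 1"
  shows "\<forall>i<4. \<forall>j<4. (\<Sum>k<2. Mm z w i k * Mm z w k j) = Mm z w i j"
  using assms by (simp add: all4 sum2 Mm_def L4_def algebra_simps)

lemma real2:
  assumes w: "w * w = z * z - 1"
  shows "realizes 4 2 (\<lambda>i j. if i = j then - z else 0) (Mm z w) (Mm z w) Dm
           (\<lambda>s i j. Dm i j + 1 / (s + z) * Mm z w i j)"
  unfolding realizes_def
proof (rule finite_subset[of _ "{- z}"])
  show "{s. resolvent_ok 2 (\<lambda>i j. if i = j then - z else 0) s \<and>
        \<not> (\<forall>X. (\<forall>i<2. \<forall>j<4. (\<Sum>k<2. (s * idm i k - (if i = k then - z else 0)) * X k j) = Mm z w i j) \<longrightarrow>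
              (\<forall>i<4. \<forall>j<4. Dm i j + 1 / (s + z) * Mm z w i j = (\<Sum>k<2. Mm z w i k * X k j) + Dm i j))}
      \<subseteq> {- z}"
  proof
    fix s assume sA: "s \<in> {s. resolvent_ok 2 (\<lambda>i j. if i = j then - z else 0) s \<and>
        \<not> (\<forall>X. (\<forall>i<2. \<forall>j<4. (\<Sum>k<2. (s * idm i k - (if i = k then - z else 0)) * X k j) = Mm z w i j) \<longrightarrow>
              (\<forall>i<4. \<forall>j<4. Dm i j + 1 / (s + z) * Mm z w i j = (\<Sum>k<2. Mm z w i k * X k j) + Dm i j))}"
    show "s \<in> {- z}"
    proof (rule ccontr)
      assume "s \<notin> {- z}"
      then have sz: "s + z \<noteq> 0" by (auto simp: add_eq_0_iff)
      from sA obtain X where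
        eq: "\<forall>i<2. \<forall>j<4. (\<Sum>k<2. (s * idm i k - (if i = k then - z else 0)) * X k j) = Mm z w i j"
        and nc: "\<not> (\<forall>i<4. \<forall>j<4. Dm i j + 1 / (s + z) * Mm z w i j = (\<Sum>k<2. Mm z w i k * X k j) + Dm i j)"
        by blast
      have X: "X k j = Mm z w k j / (s + z)" if "k < 2" "j < 4" for k j
      proof -
        have "(\<Sum>k'<2. (s * idm k k' - (if k = k' then - z else 0)) * X k' j) = Mm z w k j"
          using eq that by blast
        moreover have "(\<Sum>k'<2. (s * idm k k' - (if k = k' then - z else 0)) * X k' j) = (s + z) * X k j"
          using that by (auto simp: sum2 idm_def less_Suc_eq eval_nat_numeral algebra_simps)
        ultimately show ?thesis using sz by (simp add: field_simps)
      qed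
      have "\<forall>i<4. \<forall>j<4. Dm i j + 1 / (s + z) * Mm z w i j = (\<Sum>k<2. Mm z w i k * X k j) + Dm i j"
      proof (intro allI impI)
        fix i j :: nat assume ij: "i < 4" "j < 4"
        have "(\<Sum>k<2. Mm z w i k * X k j) = (\<Sum>k<2. Mm z w i k * Mm z w k j) / (s + z)"
          using X ij by (simp add: sum2 add_divide_distrib)
        also have "\<dots> = Mm z w i j / (s + z)" using CB[OF w] ij by simp
        finally show "Dm i j + 1 / (s + z) * Mm z w i j = (\<Sum>k<2. Mm z w i k * X k j) + Dm i j"
          by simp
      qed
      with nc show False by blast
    qed
  qed
qed simp


lemma two_points:
  assumes "eventually P (cofinite :: complex filter)"
  shows "\<exists>s1 s2. s1 \<noteq> s2 \<and> P s1 \<and> P s2"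
proof -
  have fin: "finite {x. \<not> P x}" using assms by (simp add: eventually_cofinite)
  have inf: "infinite (UNIV :: complex set)" by (rule infinite_UNIV_char_0)
  obtain s1 where s1: "s1 \<notin> {x. \<not> P x}" using ex_new_if_finite[OF inf fin] by blast
  obtain s2 where s2: "s2 \<notin> insert s1 {x. \<not> P x}" using ex_new_if_finite[OF inf] fin by blast
  show ?thesis using s1 s2 by blast
qed

lemma fin_ev: "finite {s. P s} \<Longrightarrow> eventually (\<lambda>s. \<not> P s) cofinite"
  by (simp add: eventually_cofinite)

lemma inv_inj: fixes s1 s2 z :: complex
  assumes "s1 + z \<noteq> 0" "s2 + z \<noteq> 0" "1 / (s1 + z) = 1 / (s2 + z)" shows "s1 = s2"
  using assms by (simp add: field_simps)

lemma realS:
  "realizes 2 2 (\<lambda>i j. if i = j then - z else 0) idm idm (\<lambda>i j. 0)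
      (\<lambda>s i j. if i = j then 1 / (s + z) else 0)"
  unfolding realizes_def
proof (rule finite_subset[of _ "{- z}"])
  show "{s. resolvent_ok 2 (\<lambda>i j. if i = j then - z else 0) s \<and>
        \<not> (\<forall>X. (\<forall>i<2. \<forall>j<2. (\<Sum>k<2. (s * idm i k - (if i = k then - z else 0)) * X k j) = idm i j) \<longrightarrow>
              (\<forall>i<2. \<forall>j<2. (if i = j then 1 / (s + z) else 0) = (\<Sum>k<2. idm i k * X k j) + 0))}
      \<subseteq> {- z}"
  proof
    fix s assume sA: "s \<in> {s. resolvent_ok 2 (\<lambda>i j. if i = j then - z else 0) s \<and>
        \<not> (\<forall>X. (\<forall>i<2. \<forall>j<2. (\<Sum>k<2. (s * idm i k - (if i = k then - z else 0)) * X k j) = idm i j) \<longrightarrow>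
              (\<forall>i<2. \<forall>j<2. (if i = j then 1 / (s + z) else 0) = (\<Sum>k<2. idm i k * X k j) + 0))}"
    show "s \<in> {- z}"
    proof (rule ccontr)
      assume "s \<notin> {- z}"
      then have sz: "s + z \<noteq> 0" by (auto simp: add_eq_0_iff)
      from sA obtain X where
        eq: "\<forall>i<2. \<forall>j<2. (\<Sum>k<2. (s * idm i k - (if i = k then - z else 0)) * X k j) = idm i j"
        and nc: "\<not> (\<forall>i<2. \<forall>j<2. (if i = j then 1 / (s + z) else 0) = (\<Sum>k<2. idm i k * X k j) + 0)"
        by blast
      have X: "X k j = idm k j / (s + z)" if "k < 2" "j < 2" for k j
      proof -
        have "(\<Sum>k'<2. (s * idm k k' - (if k = k' then - z else 0)) * X k' j) = idm k j"
          using eq that by blast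
        moreover have "(\<Sum>k'<2. (s * idm k k' - (if k = k' then - z else 0)) * X k' j) = (s + z) * X k j"
          using that by (auto simp: sum2 idm_def less_Suc_eq eval_nat_numeral algebra_simps)
        ultimately show ?thesis using sz by (simp add: field_simps)
      qed
      have "\<forall>i<2. \<forall>j<2. (if i = j then 1 / (s + z) else 0) = (\<Sum>k<2. idm i k * X k j) + 0"
        using X by (simp add: all2 sum2 idm_def)
      with nc show False by blast
    qed
  qed
qed simp

lemma no_low:
  fixes SS :: "complex \<Rightarrow> cmat" and z :: complex
  assumes ext: "extends4 SS (\<lambda>s i j. if i = j then 1 / (s + z) else 0)"
  shows "\<forall>m<2. \<not> realizable 4 m SS"
proof (intro allI impI notI)
  fix m :: nat assume m: "m < 2" and "realizable 4 m SS"
  then obtain A B C D where r: "realizes 4 m A B C D SS" unfolding realizable_def by blast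
  have e1: "\<forall>\<^sub>F s in cofinite. SS s 2 2 = 1 / (s + z) \<and> SS s 2 3 = 0 \<and> SS s 3 3 = 1 / (s + z)"
    using ext unfolding extends4_def
    by (rule eventually_mono) (auto simp: all2 eval_nat_numeral)
  have e2: "\<forall>\<^sub>F s in cofinite. s + z \<noteq> 0"
  proof -
    have "{s. \<not> s + z \<noteq> 0} = {- z}" by (auto simp: add_eq_0_iff)
    then show ?thesis by (simp add: eventually_cofinite)
  qed
  have m01: "m = 0 \<or> m = 1" using m by auto
  then show False
  proof
    assume m0: "m = 0"
    have "\<forall>\<^sub>F s in cofinite. SS s 2 2 = D 2 2"
      using fin_ev[OF r[unfolded realizes_def m0]]
      by (rule eventually_mono) (auto simp: resolvent_ok_def)
    then have "\<forall>\<^sub>F s in cofinite. s + z \<noteq> 0 \<and> 1 / (s + z) = D 2 2"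
      using e1 e2 by eventually_elim auto
    then obtain s1 s2 where "s1 \<noteq> s2" "s1 + z \<noteq> 0 \<and> 1 / (s1 + z) = D 2 2"
        "s2 + z \<noteq> 0 \<and> 1 / (s2 + z) = D 2 2"
      using two_points by blast
    then show False using inv_inj by metis
  next
    assume m1: "m = 1"
    let ?a = "A 0 0"
    have e3: "\<forall>\<^sub>F s in cofinite. s \<noteq> ?a" by simp
    have e4: "\<forall>\<^sub>F s in cofinite. s \<noteq> ?a \<longrightarrow> (\<forall>i<4. \<forall>j<4. SS s i j = C i 0 * (B 0 j / (s - ?a)) + D i j)"
      using fin_ev[OF r[unfolded realizes_def m1]]
    proof (rule eventually_mono)
      fix s assume H: "\<not> (resolvent_ok 1 A s \<and>
             \<not> (\<forall>X. (\<forall>i<1. \<forall>j<4. (\<Sum>k<1. (s * idm i k - A i k) * X k j) = B i j) \<longrightarrow>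
                  (\<forall>i<4. \<forall>j<4. SS s i j = (\<Sum>k<1. C i k * X k j) + D i j)))"
      show "s \<noteq> ?a \<longrightarrow> (\<forall>i<4. \<forall>j<4. SS s i j = C i 0 * (B 0 j / (s - ?a)) + D i j)"
      proof
        assume sa: "s \<noteq> ?a"
        have ro: "resolvent_ok 1 A s" unfolding resolvent_ok_def
          using sa by (auto simp: idm_def)
        define X :: cmat where "X = (\<lambda>k j. B 0 j / (s - ?a))"
        have "\<forall>i<1. \<forall>j<4. (\<Sum>k<1. (s * idm i k - A i k) * X k j) = B i j"
          using sa by (auto simp: X_def idm_def)
        then have "\<forall>i<4. \<forall>j<4. SS s i j = (\<Sum>k<1. C i k * X k j) + D i j"
          using H ro by blast
        then show "\<forall>i<4. \<forall>j<4. SS s i j = C i 0 * (B 0 j / (s - ?a)) + D i j"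
          by (simp add: X_def)
      qed
    qed
    have ev: "\<forall>\<^sub>F s in cofinite. s \<noteq> ?a \<and> s + z \<noteq> 0 \<and>
        0 = C 2 0 * (B 0 3 / (s - ?a)) + D 2 3 \<and>
        1 / (s + z) = C 2 0 * (B 0 2 / (s - ?a)) + D 2 2 \<and>
        1 / (s + z) = C 3 0 * (B 0 3 / (s - ?a)) + D 3 3"
      using e1 e2 e3 e4 by eventually_elim auto
    then obtain s1 s2 where s12: "s1 \<noteq> s2" and
      P1: "s1 \<noteq> ?a \<and> s1 + z \<noteq> 0 \<and>
        0 = C 2 0 * (B 0 3 / (s1 - ?a)) + D 2 3 \<and>
        1 / (s1 + z) = C 2 0 * (B 0 2 / (s1 - ?a)) + D 2 2 \<and>
        1 / (s1 + z) = C 3 0 * (B 0 3 / (s1 - ?a)) + D 3 3" and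
      P2: "s2 \<noteq> ?a \<and> s2 + z \<noteq> 0 \<and>
        0 = C 2 0 * (B 0 3 / (s2 - ?a)) + D 2 3 \<and>
        1 / (s2 + z) = C 2 0 * (B 0 2 / (s2 - ?a)) + D 2 2 \<and>
        1 / (s2 + z) = C 3 0 * (B 0 3 / (s2 - ?a)) + D 3 3"
      using two_points[OF ev] by blast
    have d: "1 / (s1 - ?a) \<noteq> 1 / (s2 - ?a)"
      using s12 P1 P2 by (simp add: field_simps)
    have q1: "C 2 0 * (B 0 3 / (s1 - ?a)) = C 2 0 * (B 0 3 / (s2 - ?a))"
      using P1 P2 by (metis add_right_cancel)
    then have "(C 2 0 * B 0 3) * (1 / (s1 - ?a)) = (C 2 0 * B 0 3) * (1 / (s2 - ?a))"
      by (simp add: divide_inverse mult.assoc)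
    then have "(C 2 0 * B 0 3) * (1 / (s1 - ?a) - 1 / (s2 - ?a)) = 0"
      by (simp add: right_diff_distrib)
    then have cb: "C 2 0 * B 0 3 = 0" using d by simp
    show False
    proof (cases "C 2 0 = 0")
      case True
      then have "1 / (s1 + z) = 1 / (s2 + z)" using P1 P2 by simp
      then show False using inv_inj P1 P2 s12 by metis
    next
      case False
      then have b: "B 0 3 = 0" using cb by simp
      have "1 / (s1 + z) = C 3 0 * (B 0 3 / (s1 - ?a)) + D 3 3" using P1 by blast
      then have "1 / (s1 + z) = D 3 3" using b by simp
      moreover have "1 / (s2 + z) = C 3 0 * (B 0 3 / (s2 - ?a)) + D 3 3" using P2 by blast
      then have "1 / (s2 + z) = D 3 3" using b by simp
      ultimately have "1 / (s1 + z) = 1 / (s2 + z)" by simp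
      then show False using inv_inj P1 P2 s12 by metis
    qed
  qed
qed


lemma poly_roots_coeffs:
  fixes c0 c1 c2 c3 :: complex
  assumes "infinite {s. c0 + c1 * s + c2 * s^2 + c3 * s^3 = 0}"
  shows "c0 = 0 \<and> c1 = 0 \<and> c2 = 0 \<and> c3 = 0"
proof -
  let ?p = "[:c0,c1,c2,c3:]"
  have "{s. c0 + c1 * s + c2 * s^2 + c3 * s^3 = 0} = {s. poly ?p s = 0}"
    by (auto simp: algebra_simps power2_eq_square power3_eq_cube)
  with assms have "?p = 0" using poly_roots_finite by metis
  then show ?thesis by simp
qed
lemma ev_coeffs:
  fixes c0 c1 c2 c3 :: complex
  assumes "\<forall>\<^sub>F s in cofinite. c0 + c1 * s + c2 * s^2 + c3 * s^3 = 0"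
  shows "c0 = 0 \<and> c1 = 0 \<and> c2 = 0 \<and> c3 = 0"
proof (rule poly_roots_coeffs)
  have fin: "finite {s. \<not> (c0 + c1 * s + c2 * s^2 + c3 * s^3 = 0)}"
    using assms by (simp add: eventually_cofinite)
  show "infinite {s. c0 + c1 * s + c2 * s^2 + c3 * s^3 = 0}"
  proof
    assume "finite {s. c0 + c1 * s + c2 * s^2 + c3 * s^3 = 0}"
    with fin have "finite ({s. c0 + c1 * s + c2 * s^2 + c3 * s^3 = 0} \<union> {s. \<not> (c0 + c1 * s + c2 * s^2 + c3 * s^3 = 0)})"
      by simp
    moreover have "({s. c0 + c1 * s + c2 * s^2 + c3 * s^3 = 0} \<union> {s. \<not> (c0 + c1 * s + c2 * s^2 + c3 * s^3 = 0)}) = (UNIV :: complex set)"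
      by auto
    ultimately show False using infinite_UNIV_char_0 by metis
  qed
qed

lemma N_eq:
  fixes x1 x2 x3 x4 y1 y2 y3 y4 n00 n01 n10 n11 k :: complex
  assumes "x1 * y1 + x2 * y3 = 1" "x1 * y2 + x2 * y4 = 0" "x3 * y1 + x4 * y3 = 0" "x3 * y2 + x4 * y4 = 1"
   "x1 * (n00 * y1 + n01 * y3) + x2 * (n10 * y1 + n11 * y3) = k"
   "x1 * (n00 * y2 + n01 * y4) + x2 * (n10 * y2 + n11 * y4) = 0"
   "x3 * (n00 * y1 + n01 * y3) + x4 * (n10 * y1 + n11 * y3) = 0"
   "x3 * (n00 * y2 + n01 * y4) + x4 * (n10 * y2 + n11 * y4) = k"
  shows "n00 = k \<and> n01 = 0 \<and> n10 = 0 \<and> n11 = k"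
  using assms by algebra

lemma cubic_from:
  fixes s z p r d e dt t q :: complex
  assumes "dt \<noteq> 0" "s + z \<noteq> 0" "(s * p + r) / dt + d = e / (s + z)" "dt = s^2 - t * s + q"
  shows "(r * z + d * q * z - e * q) + (p * z + r + d * q - d * t * z + e * t) * s
         + (p + d * z - d * t - e) * s^2 + d * s^3 = 0"
proof -
  have "(s * p + r) * (s + z) + d * dt * (s + z) = e * dt"
    using assms(1-3) by (simp add: field_simps)
  then show ?thesis using assms(4) by (simp add: algebra_simps power2_eq_square power3_eq_cube)
qed

lemma R2:
  fixes SS :: "complex \<Rightarrow> cmat" and z :: complex
  assumes ext: "extends4 SS (\<lambda>s i j. if i = j then 1 / (s + z) else 0)"
    and r: "realizes 4 2 A B C D SS"
  shows "\<exists>P. (\<forall>\<^sub>F s in cofinite. \<forall>i<4. \<forall>j<4. SS s i j = D i j + P i j / (s + z))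
      \<and> D 2 2 = 0 \<and> D 2 3 = 0 \<and> D 3 2 = 0 \<and> D 3 3 = 0
      \<and> P 2 2 = 1 \<and> P 2 3 = 0 \<and> P 3 2 = 0 \<and> P 3 3 = 1"
proof -
  define a00 where "a00 = A 0 0"
  define a01 where "a01 = A 0 1"
  define a10 where "a10 = A 1 0"
  define a11 where "a11 = A 1 1"
  define dt where "dt = (\<lambda>s. (s - a00) * (s - a11) - a01 * a10)"
  define P0 where "P0 = (\<lambda>i j. C i 0 * B 0 j + C i 1 * B 1 j)"
  define R where "R = (\<lambda>i j. C i 0 * (- a11 * B 0 j + a01 * B 1 j) + C i 1 * (a10 * B 0 j - a00 * B 1 j))"
  have dt_ev: "\<forall>\<^sub>F s in cofinite. dt s \<noteq> 0"
  proof -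
    let ?p = "[:a00 * a11 - a01 * a10, - (a00 + a11), 1:]"
    have "?p \<noteq> 0" by simp
    then have "finite {s. poly ?p s = 0}" by (rule poly_roots_finite)
    moreover have "{s. \<not> dt s \<noteq> 0} = {s. poly ?p s = 0}"
      by (auto simp: dt_def algebra_simps)
    ultimately show ?thesis by (simp add: eventually_cofinite)
  qed
  have main: "\<forall>\<^sub>F s in cofinite. dt s \<noteq> 0 \<and> (\<forall>i<4. \<forall>j<4. SS s i j = (s * P0 i j + R i j) / dt s + D i j)"
    using fin_ev[OF r[unfolded realizes_def]] dt_ev
  proof eventually_elim
    case (elim s)
    note H = elim(1) and ds = elim(2)
    have ro: "resolvent_ok 2 A s" unfolding resolvent_ok_def
    proof (intro allI impI)
      fix x :: "nat \<Rightarrow> complex" and j :: nat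
      assume h: "\<forall>i<2. (\<Sum>j<2. (s * idm i j - A i j) * x j) = 0" and j: "j < 2"
      have e1: "(s - a00) * x 0 - a01 * x 1 = 0"
        using h[rule_format, of 0] by (simp add: sum2 idm_def a00_def a01_def algebra_simps)
      have e2: "- a10 * x 0 + (s - a11) * x 1 = 0"
        using h[rule_format, of 1] by (simp add: sum2 idm_def a10_def a11_def algebra_simps)
      have "dt s * x 0 = 0" "dt s * x 1 = 0"
        using e1 e2 unfolding dt_def by algebra+
      then show "x j = 0" using ds j by (auto simp: less_Suc_eq eval_nat_numeral)
    qed
    define X :: cmat where "X = (\<lambda>k j. (if k = 0 then (s - a11) * B 0 j + a01 * B 1 j
                                      else a10 * B 0 j + (s - a00) * B 1 j) / dt s)"
    have "\<forall>i<2. \<forall>j<4. (\<Sum>k<2. (s * idm i k - A i k) * X k j) = B i j"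
    proof (intro allI impI)
      fix i j :: nat assume i: "i < 2" and j: "j < 4"
      have "i = 0 \<or> i = 1" using i by auto
      then show "(\<Sum>k<2. (s * idm i k - A i k) * X k j) = B i j"
      proof
        assume i0: "i = 0"
        have s1: "(\<Sum>k<2. (s * idm 0 k - A 0 k) * X k j) = (s - a00) * X 0 j - a01 * X 1 j"
          by (simp add: sum2 idm_def a00_def a01_def algebra_simps)
        have "(s - a00) * ((s - a11) * B 0 j + a01 * B 1 j) - a01 * (a10 * B 0 j + (s - a00) * B 1 j)
              = dt s * B 0 j" unfolding dt_def by (simp add: algebra_simps)
        then have "(s - a00) * X 0 j - a01 * X 1 j = B 0 j"
          using ds unfolding X_def by (simp add: diff_divide_distrib[symmetric] times_divide_eq_right)
        then show ?thesis using s1 i0 by simp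
      next
        assume i1: "i = 1"
        have s1: "(\<Sum>k<2. (s * idm 1 k - A 1 k) * X k j) = - a10 * X 0 j + (s - a11) * X 1 j"
          by (simp add: sum2 idm_def a10_def a11_def algebra_simps)
        have "- a10 * ((s - a11) * B 0 j + a01 * B 1 j) + (s - a11) * (a10 * B 0 j + (s - a00) * B 1 j)
              = dt s * B 1 j" unfolding dt_def by (simp add: algebra_simps)
        then have "- a10 * X 0 j + (s - a11) * X 1 j = B 1 j"
          using ds unfolding X_def by (simp add: diff_divide_distrib[symmetric] times_divide_eq_right)
        then show ?thesis using s1 i1 by simp
      qed
    qed
    then have "\<forall>i<4. \<forall>j<4. SS s i j = (\<Sum>k<2. C i k * X k j) + D i j"
      using H ro by blast
    moreover have "(\<Sum>k<2. C i k * X k j) = (s * P0 i j + R i j) / dt s" for i j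
      using ds by (simp add: sum2 X_def P0_def R_def field_simps)
    ultimately show ?case using ds by simp
  qed
  have e_ext: "\<forall>\<^sub>F s in cofinite. SS s 2 2 = 1 / (s + z) \<and> SS s 2 3 = 0 \<and> SS s 3 2 = 0 \<and> SS s 3 3 = 1 / (s + z)"
    using ext unfolding extends4_def
    by (rule eventually_mono) (auto simp: all2 eval_nat_numeral)
  have e_z: "\<forall>\<^sub>F s in cofinite. s + z \<noteq> 0"
  proof -
    have "{s. \<not> s + z \<noteq> 0} = {- z}" by (auto simp: add_eq_0_iff)
    then show ?thesis by (simp add: eventually_cofinite)
  qed
  define t where "t = a00 + a11"
  define q where "q = a00 * a11 - a01 * a10"
  have dtq: "dt s = s^2 - t * s + q" for s unfolding dt_def t_def q_def by (simp add: algebra_simps power2_eq_square)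
  have coef: "D i j = 0 \<and> P0 i j = e \<and> R i j = - e * (z + t)"
    if ij: "i < 4" "j < 4" and ee: "\<forall>\<^sub>F s in cofinite. SS s i j = e / (s + z)" for i j e
  proof -
    have "\<forall>\<^sub>F s in cofinite. (R i j * z + D i j * q * z - e * q) + (P0 i j * z + R i j + D i j * q - D i j * t * z + e * t) * s
         + (P0 i j + D i j * z - D i j * t - e) * s^2 + D i j * s^3 = 0"
      using main ee e_z
    proof eventually_elim
      case (elim s)
      then have "(s * P0 i j + R i j) / dt s + D i j = e / (s + z)" using ij by auto
      then show ?case using cubic_from elim dtq by blast
    qed
    from ev_coeffs[OF this] have h1: "P0 i j * z + R i j + D i j * q - D i j * t * z + e * t = 0"
      and h2: "P0 i j + D i j * z - D i j * t - e = 0" and h3: "D i j = 0" by blast+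
    from h2 h3 have p: "P0 i j = e" by simp
    from h1 h3 p have "e * z + R i j + e * t = 0" by simp
    then have "R i j = - e * (z + t)" by algebra
    with h3 p show ?thesis by blast
  qed
  have c22: "D 2 2 = 0 \<and> P0 2 2 = 1 \<and> R 2 2 = - 1 * (z + t)"
    by (rule coef) (simp_all, rule eventually_mono[OF e_ext], simp)
  have c23: "D 2 3 = 0 \<and> P0 2 3 = 0 \<and> R 2 3 = - 0 * (z + t)"
    by (rule coef) (simp_all, rule eventually_mono[OF e_ext], simp)
  have c32: "D 3 2 = 0 \<and> P0 3 2 = 0 \<and> R 3 2 = - 0 * (z + t)"
    by (rule coef) (simp_all, rule eventually_mono[OF e_ext], simp)
  have c33: "D 3 3 = 0 \<and> P0 3 3 = 1 \<and> R 3 3 = - 1 * (z + t)"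
    by (rule coef) (simp_all, rule eventually_mono[OF e_ext], simp)
  have N: "- a11 = - (z + t) \<and> a01 = 0 \<and> a10 = 0 \<and> - a00 = - (z + t)"
    by (rule N_eq[of "C 2 0" "B 0 2" "C 2 1" "B 1 2" "B 0 3" "B 1 3" "C 3 0" "C 3 1"])
       (use c22 c23 c32 c33 in \<open>simp_all add: P0_def R_def\<close>)
  then have a00: "a00 = - z" and a11: "a11 = - z" and a01: "a01 = 0" and a10: "a10 = 0"
    unfolding t_def by (auto simp: algebra_simps)
  have Rz: "R i j = z * P0 i j" for i j
    unfolding R_def P0_def a00 a11 a01 a10 by (simp add: algebra_simps)
  have dtz: "dt s = (s + z)^2" for s unfolding dt_def a00 a11 a01 a10 by (simp add: power2_eq_square)
  have "\<forall>\<^sub>F s in cofinite. \<forall>i<4. \<forall>j<4. SS s i j = D i j + P0 i j / (s + z)"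
    using main
  proof eventually_elim
    case (elim s)
    then have sz: "s + z \<noteq> 0" using dtz by auto
    show ?case
    proof (intro allI impI)
      fix i j :: nat assume "i < 4" "j < 4"
      then have "SS s i j = (s * P0 i j + R i j) / dt s + D i j" using elim by auto
      also have "\<dots> = D i j + P0 i j / (s + z)"
      proof -
        have "s * P0 i j + z * P0 i j = (s + z) * P0 i j" by (simp add: algebra_simps)
        moreover have "(s + z) * P0 i j / (s + z)^2 = P0 i j / (s + z)"
          using sz by (simp add: power2_eq_square)
        ultimately show ?thesis unfolding Rz dtz by simp
      qed
      finally show "SS s i j = D i j + P0 i j / (s + z)" .
    qed
  qed
  then show ?thesis using c22 c23 c32 c33 by blast
qed


lemma FINs:
  fixes d00 d01 d11 d02 d03 d12 d13 p00 p01 p11 p02 p03 p12 p13 z :: complex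
  assumes
   e22: "d02 * d02 + d12 * d12 = 1" and e23: "d02 * d03 + d12 * d13 = 0" and e33: "d03 * d03 + d13 * d13 = 1"
   and f02: "d00 * d02 + d01 * d12 = 0" and f03: "d00 * d03 + d01 * d13 = 0"
   and f12: "d01 * d02 + d11 * d12 = 0" and f13: "d01 * d03 + d11 * d13 = 0"
   and g02: "p00 * d02 + p01 * d12 = d00 * p02 + d01 * p12 + d02"
   and g03: "p00 * d03 + p01 * d13 = d00 * p03 + d01 * p13 + d03"
   and g12: "p01 * d02 + p11 * d12 = d01 * p02 + d11 * p12 + d12"
   and g13: "p01 * d03 + p11 * d13 = d01 * p03 + d11 * p13 + d13"
   and h02: "z * ((p00 * d02 + p01 * d12) + (d00 * p02 + d01 * p12 + d02)) + (p00 * p02 + p01 * p12 + p02) = 0"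
   and h03: "z * ((p00 * d03 + p01 * d13) + (d00 * p03 + d01 * p13 + d03)) + (p00 * p03 + p01 * p13 + p03) = 0"
   and h12: "z * ((p01 * d02 + p11 * d12) + (d01 * p02 + d11 * p12 + d12)) + (p01 * p02 + p11 * p12 + p12) = 0"
   and h13: "z * ((p01 * d03 + p11 * d13) + (d01 * p03 + d11 * p13 + d13)) + (p01 * p03 + p11 * p13 + p13) = 0"
   and h22: "z * (2 * (p02 * d02 + p12 * d12)) + (p02 * p02 + p12 * p12 + 1) = 0"
  shows "z * z = 1"
proof -
  have EE: "d02 * d02 + d03 * d03 = 1" "d02 * d12 + d03 * d13 = 0" "d12 * d12 + d13 * d13 = 1"
    using e22 e23 e33 by algebra+
  have D0: "d00 = 0" "d01 = 0" "d11 = 0"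
    using EE f02 f03 f12 f13 by algebra+
  have P11: "p00 = 1" "p01 = 0" "p11 = 1"
    using EE g02 g03 g12 g13 D0 by algebra+
  have P12: "p02 = - z * d02" "p12 = - z * d12"
    using h02 h12 P11 D0 by algebra+
  show ?thesis using h22 P12 e22 by algebra
qed


lemma FIN:
  fixes d p :: cmat and z :: complex
  assumes symd: "\<forall>i<4. \<forall>j<4. d i j = d j i" and symp: "\<forall>i<4. \<forall>j<4. p i j = p j i"
    and reald: "\<forall>i<4. \<forall>j<4. cnj (d i j) = d i j" and realp: "\<forall>i<4. \<forall>j<4. cnj (p i j) = p i j"
    and low: "d 2 2 = 0" "d 2 3 = 0" "d 3 2 = 0" "d 3 3 = 0" "p 2 2 = 1" "p 2 3 = 0" "p 3 2 = 0" "p 3 3 = 1"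
    and A: "\<forall>i<4. \<forall>j<4. mmult 4 d (madj d) i j = idm i j"
    and B: "\<forall>i<4. \<forall>j<4. mmult 4 p (madj d) i j = mmult 4 d (madj p) i j"
    and C: "\<forall>i<4. \<forall>j<4. z * (mmult 4 p (madj d) i j + mmult 4 d (madj p) i j) + mmult 4 p (madj p) i j = 0"
  shows "z * z = 1"
proof -
  have s: "d 1 0 = d 0 1" "d 2 0 = d 0 2" "d 2 1 = d 1 2" "d 3 0 = d 0 3" "d 3 1 = d 1 3"
          "p 1 0 = p 0 1" "p 2 0 = p 0 2" "p 2 1 = p 1 2" "p 3 0 = p 0 3" "p 3 1 = p 1 3"
    using symd symp by simp_all
  have rd: "cnj (d i j) = d i j" "cnj (p i j) = p i j" if "i < 4" "j < 4" for i j
    using reald realp that by auto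
  note rr = rd[of 0 0] rd[of 0 1] rd[of 0 2] rd[of 0 3] rd[of 1 0] rd[of 1 1] rd[of 1 2] rd[of 1 3]
            rd[of 2 0] rd[of 2 1] rd[of 2 2] rd[of 2 3] rd[of 3 0] rd[of 3 1] rd[of 3 2] rd[of 3 3]
  note ss = mmult_def madj_def sum4 idm_def s[simplified] low
  have e22: "d 0 2 * d 0 2 + d 1 2 * d 1 2 = 1" using A[rule_format, of 2 2] rr[simplified] by (simp add: ss)
  have e23: "d 0 2 * d 0 3 + d 1 2 * d 1 3 = 0" using A[rule_format, of 2 3] rr[simplified] by (simp add: ss)
  have e33: "d 0 3 * d 0 3 + d 1 3 * d 1 3 = 1" using A[rule_format, of 3 3] rr[simplified] by (simp add: ss)
  have f02: "d 0 0 * d 0 2 + d 0 1 * d 1 2 = 0" using A[rule_format, of 0 2] rr[simplified] by (simp add: ss)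
  have f03: "d 0 0 * d 0 3 + d 0 1 * d 1 3 = 0" using A[rule_format, of 0 3] rr[simplified] by (simp add: ss)
  have f12: "d 0 1 * d 0 2 + d 1 1 * d 1 2 = 0" using A[rule_format, of 1 2] rr[simplified] by (simp add: ss)
  have f13: "d 0 1 * d 0 3 + d 1 1 * d 1 3 = 0" using A[rule_format, of 1 3] rr[simplified] by (simp add: ss)
  have g02: "p 0 0 * d 0 2 + p 0 1 * d 1 2 = d 0 0 * p 0 2 + d 0 1 * p 1 2 + d 0 2"
    using B[rule_format, of 0 2] rr[simplified] by (simp add: ss algebra_simps)
  have g03: "p 0 0 * d 0 3 + p 0 1 * d 1 3 = d 0 0 * p 0 3 + d 0 1 * p 1 3 + d 0 3"
    using B[rule_format, of 0 3] rr[simplified] by (simp add: ss algebra_simps)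
  have g12: "p 0 1 * d 0 2 + p 1 1 * d 1 2 = d 0 1 * p 0 2 + d 1 1 * p 1 2 + d 1 2"
    using B[rule_format, of 1 2] rr[simplified] by (simp add: ss algebra_simps)
  have g13: "p 0 1 * d 0 3 + p 1 1 * d 1 3 = d 0 1 * p 0 3 + d 1 1 * p 1 3 + d 1 3"
    using B[rule_format, of 1 3] rr[simplified] by (simp add: ss algebra_simps)
  have h02: "z * ((p 0 0 * d 0 2 + p 0 1 * d 1 2) + (d 0 0 * p 0 2 + d 0 1 * p 1 2 + d 0 2)) + (p 0 0 * p 0 2 + p 0 1 * p 1 2 + p 0 2) = 0"
    using C[rule_format, of 0 2] rr[simplified] by (simp add: ss algebra_simps)
  have h03: "z * ((p 0 0 * d 0 3 + p 0 1 * d 1 3) + (d 0 0 * p 0 3 + d 0 1 * p 1 3 + d 0 3)) + (p 0 0 * p 0 3 + p 0 1 * p 1 3 + p 0 3) = 0"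
    using C[rule_format, of 0 3] rr[simplified] by (simp add: ss algebra_simps)
  have h12: "z * ((p 0 1 * d 0 2 + p 1 1 * d 1 2) + (d 0 1 * p 0 2 + d 1 1 * p 1 2 + d 1 2)) + (p 0 1 * p 0 2 + p 1 1 * p 1 2 + p 1 2) = 0"
    using C[rule_format, of 1 2] rr[simplified] by (simp add: ss algebra_simps)
  have h13: "z * ((p 0 1 * d 0 3 + p 1 1 * d 1 3) + (d 0 1 * p 0 3 + d 1 1 * p 1 3 + d 1 3)) + (p 0 1 * p 0 3 + p 1 1 * p 1 3 + p 1 3) = 0"
    using C[rule_format, of 1 3] rr[simplified] by (simp add: ss algebra_simps)
  have h22: "z * (2 * (p 0 2 * d 0 2 + p 1 2 * d 1 2)) + (p 0 2 * p 0 2 + p 1 2 * p 1 2 + 1) = 0"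
    using C[rule_format, of 2 2] rr[simplified] by (simp add: ss algebra_simps)
  show ?thesis by (rule FINs[OF e22 e23 e33 f02 f03 f12 f13 g02 g03 g12 g13 h02 h03 h12 h13 h22])
qed


lemma expand:
  "mmult n (\<lambda>i j. D i j + f * M i j) (madj (\<lambda>i j. D i j + f * M i j)) i j
     = mmult n D (madj D) i j + f * mmult n M (madj D) i j + cnj f * mmult n D (madj M) i j
       + f * cnj f * mmult n M (madj M) i j"
proof -
  have "\<And>l. (D i l + f * M i l) * cnj (D j l + f * M j l)
     = D i l * cnj (D j l) + f * (M i l * cnj (D j l)) + cnj f * (D i l * cnj (M j l))
       + f * cnj f * (M i l * cnj (M j l))"
    by (simp add: algebra_simps)
  then show ?thesis
    unfolding mmult_def madj_def
    by (simp only: sum.distrib sum_distrib_left[symmetric])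
qed

lemma mmult_cong4:
  assumes "\<forall>i<4. \<forall>j<4. X i j = Y i j" "i < 4" "j < 4"
  shows "mmult 4 X (madj X) i j = mmult 4 Y (madj Y) i j"
  unfolding mmult_def madj_def using assms by (intro sum.cong refl) auto

lemma unit_poly0:
  fixes a b c d e u z w1 w2 :: complex
  assumes "w1 \<noteq> 0" "w2 \<noteq> 0" "w1 = \<i> * u + z" "w2 = z - \<i> * u"
    "a + (1 / w1) * b + (1 / w2) * c + (1 / w1) * (1 / w2) * d = e"
  shows "(z^2 * (a - e) + z * (b + c) + d) + (\<i> * (c - b)) * u + (a - e) * u^2 + 0 * u^3 = 0"
proof -
  have "w1 * w2 * a + w2 * b + w1 * c + d = w1 * w2 * e"
    using assms(1,2,5) by (simp add: field_simps)
  then show ?thesis unfolding assms(3,4) by (simp add: algebra_simps power2_eq_square)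
qed

lemma unit_poly:
  fixes a b c d e u z :: complex
  assumes "\<i> * u + z \<noteq> 0" "z - \<i> * u \<noteq> 0"
    "a + (1 / (\<i> * u + z)) * b + (1 / (z - \<i> * u)) * c + (1 / (\<i> * u + z)) * (1 / (z - \<i> * u)) * d = e"
  shows "(z^2 * (a - e) + z * (b + c) + d) + (\<i> * (c - b)) * u + (a - e) * u^2 + 0 * u^3 = 0"
  by (rule unit_poly0[OF assms(1,2) refl refl assms(3)])

lemma real_cof_infinite:
  assumes "eventually P (cofinite :: real filter)"
  shows "infinite ((of_real :: real \<Rightarrow> complex) ` {x. P x})"
proof
  assume "finite ((of_real :: real \<Rightarrow> complex) ` {x. P x})"
  then have f1: "finite {x. P x}" by (rule finite_imageD) (simp add: inj_on_def)
  have f2: "finite {x. \<not> P x}" using assms by (simp add: eventually_cofinite)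
  have "finite ({x. P x} \<union> {x. \<not> P x})" using f1 f2 by simp
  moreover have "{x. P x} \<union> {x. \<not> P x} = (UNIV :: real set)" by auto
  ultimately show False using infinite_UNIV_char_0 by metis
qed

lemma U:
  fixes SS :: "complex \<Rightarrow> cmat" and D P :: cmat and \<zeta> :: real
  assumes ev: "\<forall>\<^sub>F s in cofinite. \<forall>i<4. \<forall>j<4. SS s i j = D i j + P i j / (s + of_real \<zeta>)"
    and inn: "inner_fun 4 SS"
  shows "\<forall>i<4. \<forall>j<4. mmult 4 D (madj D) i j = idm i j \<and> mmult 4 P (madj D) i j = mmult 4 D (madj P) i j
     \<and> of_real \<zeta> * (mmult 4 P (madj D) i j + mmult 4 D (madj P) i j) + mmult 4 P (madj P) i j = 0"
proof (intro allI impI)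
  fix i j :: nat assume ij: "i < 4" "j < 4"
  let ?z = "complex_of_real \<zeta>"
  let ?a = "mmult 4 D (madj D) i j" and ?b = "mmult 4 P (madj D) i j"
  let ?c = "mmult 4 D (madj P) i j" and ?d = "mmult 4 P (madj P) i j" and ?e = "idm i j"
  have inj: "inj (\<lambda>\<omega>::real. \<i> * complex_of_real \<omega>)" by (auto simp: inj_def)
  have ev1: "\<forall>\<^sub>F \<omega> in cofinite. \<forall>i<4. \<forall>j<4. SS (\<i> * of_real \<omega>) i j = D i j + P i j / (\<i> * of_real \<omega> + ?z)"
    using MOST_inj[OF ev inj] by simp
  have ev2: "\<forall>\<^sub>F \<omega> in cofinite. \<omega> \<noteq> (0::real)" by simp
  have ev3: "\<forall>\<^sub>F \<omega> in cofinite. (?z^2 * (?a - ?e) + ?z * (?b + ?c) + ?d) + (\<i> * (?c - ?b)) * of_real \<omega>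
        + (?a - ?e) * (of_real \<omega>)^2 + 0 * (of_real \<omega>)^3 = 0"
    using ev1 ev2
  proof eventually_elim
    case (elim \<omega>)
    let ?u = "complex_of_real \<omega>"
    have n1: "\<i> * ?u + ?z \<noteq> 0" using elim(2) by (simp add: complex_eq_iff)
    have n2: "?z - \<i> * ?u \<noteq> 0" using elim(2) by (simp add: complex_eq_iff)
    have "\<forall>i<4. \<forall>j<4. SS (\<i> * ?u) i j = D i j + (1 / (\<i> * ?u + ?z)) * P i j"
      using elim(1) by simp
    then have "mmult 4 (SS (\<i> * ?u)) (madj (SS (\<i> * ?u))) i j
        = mmult 4 (\<lambda>i j. D i j + (1 / (\<i> * ?u + ?z)) * P i j) (madj (\<lambda>i j. D i j + (1 / (\<i> * ?u + ?z)) * P i j)) i j"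
      using ij by (rule mmult_cong4)
    also have "\<dots> = ?a + (1 / (\<i> * ?u + ?z)) * ?b + cnj (1 / (\<i> * ?u + ?z)) * ?c
        + (1 / (\<i> * ?u + ?z)) * cnj (1 / (\<i> * ?u + ?z)) * ?d"
      by (rule expand)
    also have "cnj (1 / (\<i> * ?u + ?z)) = 1 / (?z - \<i> * ?u)" by simp
    finally have "?a + (1 / (\<i> * ?u + ?z)) * ?b + (1 / (?z - \<i> * ?u)) * ?c
        + (1 / (\<i> * ?u + ?z)) * (1 / (?z - \<i> * ?u)) * ?d = ?e"
      using inn ij unfolding inner_fun_def by simp
    then show ?case using unit_poly[OF n1 n2] by blast
  qed
  have "infinite {u. (?z^2 * (?a - ?e) + ?z * (?b + ?c) + ?d) + (\<i> * (?c - ?b)) * u + (?a - ?e) * u^2 + 0 * u^3 = 0}"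
  proof -
    have "infinite ((of_real :: real \<Rightarrow> complex) ` {\<omega>. (?z^2 * (?a - ?e) + ?z * (?b + ?c) + ?d) + (\<i> * (?c - ?b)) * of_real \<omega>
        + (?a - ?e) * (of_real \<omega>)^2 + 0 * (of_real \<omega>)^3 = 0})"
      by (rule real_cof_infinite[OF ev3])
    moreover have "(of_real :: real \<Rightarrow> complex) ` {\<omega>. (?z^2 * (?a - ?e) + ?z * (?b + ?c) + ?d) + (\<i> * (?c - ?b)) * of_real \<omega>
        + (?a - ?e) * (of_real \<omega>)^2 + 0 * (of_real \<omega>)^3 = 0}
      \<subseteq> {u. (?z^2 * (?a - ?e) + ?z * (?b + ?c) + ?d) + (\<i> * (?c - ?b)) * u + (?a - ?e) * u^2 + 0 * u^3 = 0}"
      by auto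
    ultimately show ?thesis using finite_subset by blast
  qed
  from poly_roots_coeffs[OF this]
  have h0: "?z^2 * (?a - ?e) + ?z * (?b + ?c) + ?d = 0" and h1: "\<i> * (?c - ?b) = 0" and h2: "?a - ?e = 0"
    by blast+
  from h2 have "?a = ?e" by simp
  moreover from h1 have "?b = ?c" by simp
  moreover from h0 h2 have "?z * (?b + ?c) + ?d = 0" by simp
  ultimately show "?a = ?e \<and> ?b = ?c \<and> ?z * (?b + ?c) + ?d = 0" by blast
qed

lemma lin:
  fixes a b c d s z :: complex
  assumes "s + z \<noteq> 0" "a + b / (s + z) = c + d / (s + z)"
  shows "(z * (a - c) + (b - d)) + (a - c) * s + 0 * s^2 + 0 * s^3 = 0"
proof -
  have "a * (s + z) + b = c * (s + z) + d" using assms by (simp add: field_simps)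
  then show ?thesis by (simp add: algebra_simps)
qed

lemma SR:
  fixes SS :: "complex \<Rightarrow> cmat" and D P :: cmat and \<zeta> :: real
  assumes ev: "\<forall>\<^sub>F s in cofinite. \<forall>i<4. \<forall>j<4. SS s i j = D i j + P i j / (s + of_real \<zeta>)"
    and sym: "symmetric_fun 4 SS" and rc: "real_coeffs 4 SS"
  shows "\<forall>i<4. \<forall>j<4. D i j = D j i \<and> P i j = P j i \<and> cnj (D i j) = D i j \<and> cnj (P i j) = P i j"
proof (intro allI impI)
  fix i j :: nat assume ij: "i < 4" "j < 4"
  let ?z = "complex_of_real \<zeta>"
  have ez: "\<forall>\<^sub>F s in cofinite. s + ?z \<noteq> 0"
  proof -
    have "{s. \<not> s + ?z \<noteq> 0} = {- ?z}" by (auto simp: add_eq_0_iff)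
    then show ?thesis by (simp add: eventually_cofinite)
  qed
  have "\<forall>\<^sub>F s in cofinite. (?z * (D i j - D j i) + (P i j - P j i)) + (D i j - D j i) * s + 0 * s^2 + 0 * s^3 = 0"
    using ev sym ez unfolding symmetric_fun_def
  proof eventually_elim
    case (elim s)
    then have "D i j + P i j / (s + ?z) = D j i + P j i / (s + ?z)" using ij by metis
    then show ?case using lin elim(3) by blast
  qed
  from ev_coeffs[OF this] have c0: "?z * (D i j - D j i) + (P i j - P j i) = 0" and c1: "D i j - D j i = 0"
    by blast+
  from c1 have s1a: "D i j = D j i" by simp
  with c0 have "P i j - P j i = 0" by simp
  then have s1: "D i j = D j i" "P i j = P j i" using s1a by simp_all
  have injc: "inj cnj" by (auto simp: inj_def)
  have evc: "\<forall>\<^sub>F s in cofinite. \<forall>i<4. \<forall>j<4. SS (cnj s) i j = D i j + P i j / (cnj s + ?z)"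
    using MOST_inj[OF ev injc] by simp
  have "\<forall>\<^sub>F s in cofinite. (?z * (D i j - cnj (D i j)) + (P i j - cnj (P i j))) + (D i j - cnj (D i j)) * s + 0 * s^2 + 0 * s^3 = 0"
    using ev evc rc ez unfolding real_coeffs_def
  proof eventually_elim
    case (elim s)
    have "SS s i j = cnj (SS (cnj s) i j)" using elim(3) ij by blast
    also have "SS (cnj s) i j = D i j + P i j / (cnj s + ?z)" using elim(2) ij by blast
    also have "cnj (D i j + P i j / (cnj s + ?z)) = cnj (D i j) + cnj (P i j) / (s + ?z)" by simp
    finally have "D i j + P i j / (s + ?z) = cnj (D i j) + cnj (P i j) / (s + ?z)"
      using elim(1) ij by simp
    then show ?case using lin elim(4) by blast
  qed
  from ev_coeffs[OF this] have c0: "?z * (D i j - cnj (D i j)) + (P i j - cnj (P i j)) = 0"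
    and c1: "D i j - cnj (D i j) = 0" by blast+
  from c1 have s2a: "cnj (D i j) = D i j" by simp
  with c0 have "P i j - cnj (P i j) = 0" by simp
  then have s2: "cnj (D i j) = D i j" "cnj (P i j) = P i j" using s2a by simp_all
  show "D i j = D j i \<and> P i j = P j i \<and> cnj (D i j) = D i j \<and> cnj (P i j) = P i j"
    using s1 s2 by blast
qed



lemma sum_ind: "(\<Sum>j<(p::nat). a j * (if j = k then 1 else 0)) = (if k < p then a k else (0::complex))"
  by (induct p) (auto simp: less_Suc_eq)

lemma diag_bound:
  fixes X :: cmat
  assumes le: "le_identity p (mmult p X (madj X))" and k: "k < p"
  shows "cmod (X k k) \<le> 1"
proof -
  define v :: "nat \<Rightarrow> complex" where "v = (\<lambda>i. if i = k then 1 else 0)"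
  let ?M = "mmult p X (madj X)"
  have "(\<Sum>i<p. \<Sum>j<p. cnj (v i) * (idm i j - ?M i j) * v j) = (\<Sum>i<p. if i = k then idm k k - ?M k k else 0)"
    by (rule sum.cong[OF refl]) (auto simp: v_def k sum_ind)
  also have "\<dots> = 1 - ?M k k" using k by (simp add: idm_def)
  finally have q: "(\<Sum>i<p. \<Sum>j<p. cnj (v i) * (idm i j - ?M i j) * v j) = 1 - ?M k k" .
  have "?M k k = (\<Sum>l<p. X k l * cnj (X k l))" by (simp add: mmult_def madj_def)
  also have "\<dots> = of_real (\<Sum>l<p. (cmod (X k l))^2)"
    unfolding of_real_sum by (rule sum.cong[OF refl]) (simp only: complex_norm_square)
  finally have Mk: "?M k k = of_real (\<Sum>l<p. (cmod (X k l))^2)" .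
  from le have "0 \<le> Re (1 - ?M k k)" unfolding le_identity_def Let_def q[symmetric] by blast
  then have "(\<Sum>l<p. (cmod (X k l))^2) \<le> 1" using Mk by simp
  moreover have "(cmod (X k k))^2 \<le> (\<Sum>l<p. (cmod (X k l))^2)"
    by (rule member_le_sum[where f = "\<lambda>l. (cmod (X k l))^2"]) (use k in auto)
  ultimately have "(cmod (X k k))^2 \<le> 1" by linarith
  then show ?thesis by (simp add: power_le_one_iff abs_le_iff)
qed

lemma big_inv:
  fixes t \<zeta> :: real
  assumes "t + \<zeta> \<noteq> 0" "\<bar>t + \<zeta>\<bar> < 1"
  shows "cmod (1 / (complex_of_real t + complex_of_real \<zeta>)) > 1"
proof -
  have "cmod (1 / (complex_of_real t + complex_of_real \<zeta>)) = 1 / \<bar>t + \<zeta>\<bar>"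
    by (simp only: of_real_add[symmetric] norm_divide norm_of_real norm_one)
  also have "\<dots> > 1" using assms by (simp add: field_simps)
  finally show ?thesis .
qed

lemma Zlem:
  fixes SS :: "complex \<Rightarrow> cmat" and \<zeta> :: real
  assumes sch: "schur_fun 4 SS"
    and ext: "extends4 SS (\<lambda>s i j. if i = j then 1 / (s + complex_of_real \<zeta>) else 0)"
  shows "\<zeta> \<ge> 1"
proof (rule ccontr)
  assume "\<not> \<zeta> \<ge> 1"
  then have z1: "\<zeta> < 1" by simp
  have e1: "\<forall>\<^sub>F s in cofinite. SS s 2 2 = 1 / (s + complex_of_real \<zeta>)"
    using ext unfolding extends4_def by (rule eventually_mono) (auto simp: all2 eval_nat_numeral)
  have injr: "inj (complex_of_real)" by (auto simp: inj_def)
  have e2: "\<forall>\<^sub>F t in cofinite. SS (complex_of_real t) 2 2 = 1 / (complex_of_real t + complex_of_real \<zeta>) \<and> t \<noteq> - \<zeta>"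
    using MOST_inj[OF e1 injr] MOST_neq(1)[of "- \<zeta>"] by (simp add: eventually_conj_iff)
  define lo where "lo = max 0 (-1 - \<zeta>)"
  define hi where "hi = 1 - \<zeta>"
  have "lo < hi" using z1 by (simp add: lo_def hi_def)
  then have inf: "infinite {lo<..<hi}" by simp
  have fin: "finite {t. \<not> (SS (complex_of_real t) 2 2 = 1 / (complex_of_real t + complex_of_real \<zeta>) \<and> t \<noteq> - \<zeta>)}"
    using e2 by (simp add: eventually_cofinite)
  obtain t where t: "t \<in> {lo<..<hi} - {t. \<not> (SS (complex_of_real t) 2 2 = 1 / (complex_of_real t + complex_of_real \<zeta>) \<and> t \<noteq> - \<zeta>)}"
    using infinite_imp_nonempty[OF Diff_infinite_finite[OF fin inf]] by blast
  then have tl: "lo < t" "t < hi" and tg: "SS (complex_of_real t) 2 2 = 1 / (complex_of_real t + complex_of_real \<zeta>)"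
    and tn: "t \<noteq> - \<zeta>" by auto
  have t0: "t > 0" using tl by (simp add: lo_def)
  have ta: "\<bar>t + \<zeta>\<bar> < 1" using tl by (simp add: lo_def hi_def abs_less_iff)
  have tz: "t + \<zeta> \<noteq> 0" using tn by linarith
  have "complex_of_real t \<in> RHP" using t0 by (simp add: RHP_def)
  then have "le_identity 4 (mmult 4 (SS (complex_of_real t)) (madj (SS (complex_of_real t))))"
    using sch unfolding schur_fun_def by blast
  from diag_bound[OF this, of 2] have "cmod (SS (complex_of_real t) 2 2) \<le> 1" by simp
  with tg big_inv[OF tz ta] show False by simp
qed


lemma nz: fixes \<zeta> :: real assumes "s \<in> RHP" "\<zeta> \<ge> 0" shows "s + complex_of_real \<zeta> \<noteq> 0"
  using assms by (auto simp: RHP_def complex_eq_iff)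

lemma f_le1: fixes \<zeta> :: real assumes "s \<in> RHP" "\<zeta> \<ge> 1" shows "cmod (1 / (s + complex_of_real \<zeta>)) \<le> 1"
proof -
  have "1 \<le> Re (s + complex_of_real \<zeta>)" using assms by (simp add: RHP_def)
  also have "\<dots> \<le> cmod (s + complex_of_real \<zeta>)" by (rule complex_Re_le_cmod)
  finally have "1 \<le> cmod (s + complex_of_real \<zeta>)" .
  then show ?thesis by (simp add: norm_divide divide_le_eq_1)
qed

lemma diagq:
  fixes f :: complex
  shows "(\<Sum>i<2. \<Sum>j<2. cnj (v i) * (idm i j - mmult 2 (\<lambda>i j. if i = j then f else 0) (madj (\<lambda>i j. if i = j then f else 0)) i j) * v j)
     = (1 - f * cnj f) * (cnj (v 0) * v 0 + cnj (v 1) * v 1)"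
  by (simp add: sum2 mmult_def madj_def idm_def algebra_simps)

lemma part1:
  fixes \<zeta> :: real
  shows "schur_fun 2 (\<lambda>s i j. if i = j then 1 / (s + complex_of_real \<zeta>) else 0) \<longleftrightarrow> \<zeta> \<ge> 1"
    (is "schur_fun 2 ?S \<longleftrightarrow> _")
proof
  assume sch: "schur_fun 2 ?S"
  show "\<zeta> \<ge> 1"
  proof (rule ccontr)
    assume "\<not> \<zeta> \<ge> 1"
    then have z1: "\<zeta> < 1" by simp
    define t where "t = (if \<zeta> > -1 then (1 - \<zeta>) / 2 else 1 / 2 - \<zeta>)"
    have t0: "t > 0" using z1 by (auto simp: t_def)
    have ta: "\<bar>t + \<zeta>\<bar> < 1" and tz: "t + \<zeta> \<noteq> 0" using z1 by (auto simp: t_def abs_less_iff field_simps)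
    have "complex_of_real t \<in> RHP" using t0 by (simp add: RHP_def)
    then have "le_identity 2 (mmult 2 (?S (complex_of_real t)) (madj (?S (complex_of_real t))))"
      using sch unfolding schur_fun_def by blast
    from diag_bound[OF this, of 0] have "cmod (?S (complex_of_real t) 0 0) \<le> 1" by simp
    with big_inv[OF tz ta] show False by simp
  qed
next
  assume z1: "\<zeta> \<ge> 1"
  let ?z = "complex_of_real \<zeta>"
  have rat: "rational_mfun 2 ?S"
    unfolding rational_mfun_def realizable_def using realS by blast
  have hol: "\<forall>i<2. \<forall>j<2. (\<lambda>s. ?S s i j) holomorphic_on RHP"
  proof (intro allI impI)
    fix i j :: nat
    show "(\<lambda>s. ?S s i j) holomorphic_on RHP"
    proof (cases "i = j")
      case True
      have "(\<lambda>s. 1 / (s + ?z)) holomorphic_on RHP"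
        using nz z1 by (auto intro!: holomorphic_intros)
      then show ?thesis using True by simp
    next
      case False then show ?thesis by simp
    qed
  qed
  have le: "le_identity 2 (mmult 2 (?S s) (madj (?S s)))" if s: "s \<in> RHP" for s
    unfolding le_identity_def Let_def
  proof (intro allI)
    fix v :: "nat \<Rightarrow> complex"
    let ?f = "1 / (s + ?z)"
    have "(\<Sum>i<2. \<Sum>j<2. cnj (v i) * (idm i j - mmult 2 (?S s) (madj (?S s)) i j) * v j)
        = (1 - ?f * cnj ?f) * (cnj (v 0) * v 0 + cnj (v 1) * v 1)"
      by (rule diagq)
    also have "\<dots> = of_real ((1 - (cmod ?f)^2) * ((cmod (v 0))^2 + (cmod (v 1))^2))"
      by (simp only: of_real_mult of_real_diff of_real_add of_real_1 complex_norm_square mult.commute)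
    finally have q: "(\<Sum>i<2. \<Sum>j<2. cnj (v i) * (idm i j - mmult 2 (?S s) (madj (?S s)) i j) * v j)
        = of_real ((1 - (cmod ?f)^2) * ((cmod (v 0))^2 + (cmod (v 1))^2))" .
    have "(cmod ?f)^2 \<le> 1" using f_le1[OF s z1] by (simp add: power_le_one)
    then have "0 \<le> (1 - (cmod ?f)^2) * ((cmod (v 0))^2 + (cmod (v 1))^2)" by simp
    then show "(\<Sum>i<2. \<Sum>j<2. cnj (v i) * (idm i j - mmult 2 (?S s) (madj (?S s)) i j) * v j) \<in> \<real> \<and>
          0 \<le> Re (\<Sum>i<2. \<Sum>j<2. cnj (v i) * (idm i j - mmult 2 (?S s) (madj (?S s)) i j) * v j)"
      unfolding q by simp
  qed
  show "schur_fun 2 ?S" unfolding schur_fun_def using rat hol le by blast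
qed


definition SSc :: "real \<Rightarrow> complex \<Rightarrow> cmat" where
  "SSc \<zeta> = (\<lambda>s i j. Dm i j + 1 / (s + complex_of_real \<zeta>) * Mm (complex_of_real \<zeta>) (complex_of_real (sqrt (\<zeta>^2 - 1))) i j)"

lemma w_facts:
  fixes \<zeta> :: real assumes "\<zeta> \<ge> 1"
  shows "complex_of_real (sqrt (\<zeta>^2 - 1)) * complex_of_real (sqrt (\<zeta>^2 - 1))
       = complex_of_real \<zeta> * complex_of_real \<zeta> - 1"
proof -
  have "\<zeta>^2 - 1 \<ge> 0" using assms by (simp add: one_le_power)
  then have "sqrt (\<zeta>^2 - 1) * sqrt (\<zeta>^2 - 1) = \<zeta> * \<zeta> - 1" by (simp add: power2_eq_square)
  then have "complex_of_real (sqrt (\<zeta>^2 - 1) * sqrt (\<zeta>^2 - 1)) = complex_of_real (\<zeta> * \<zeta> - 1)" by simp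
  then show ?thesis by (simp only: of_real_mult of_real_diff of_real_1)
qed

lemma gval:
  fixes \<zeta> :: real and s :: complex
  assumes u: "s + complex_of_real \<zeta> \<noteq> 0"
  shows "1 / (s + complex_of_real \<zeta>) + cnj (1 / (s + complex_of_real \<zeta>))
       - 1 / (s + complex_of_real \<zeta>) * cnj (1 / (s + complex_of_real \<zeta>)) * (2 * complex_of_real \<zeta>)
       = complex_of_real (2 * Re s / (cmod (s + complex_of_real \<zeta>))^2)"
proof -
  define u where "u = s + complex_of_real \<zeta>"
  have u0: "u \<noteq> 0" using u by (simp add: u_def)
  then have cu0: "cnj u \<noteq> 0" by simp
  have "1 / u + cnj (1 / u) - 1 / u * cnj (1 / u) * (2 * complex_of_real \<zeta>)
      = (u + cnj u - 2 * complex_of_real \<zeta>) / (u * cnj u)"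
    using u0 cu0 by (simp add: field_simps)
  also have "u + cnj u = complex_of_real (2 * Re u)" by (rule complex_add_cnj)
  also have "u * cnj u = complex_of_real ((cmod u)^2)" by (simp only: complex_norm_square)
  also have "Re u = Re s + \<zeta>" by (simp add: u_def)
  finally show ?thesis unfolding u_def[symmetric] by (simp add: algebra_simps)
qed

lemma ext_c: "extends4 (SSc \<zeta>) (\<lambda>s i j. if i = j then 1 / (s + complex_of_real \<zeta>) else 0)"
  unfolding extends4_def SSc_def
  by (rule always_eventually) (simp add: all2 Dm_def Mm_def L4_def)

lemma sym_c: "symmetric_fun 4 (SSc \<zeta>)"
  unfolding symmetric_fun_def SSc_def
  by (rule always_eventually) (simp add: all4 Dm_def Mm_def L4_def)

lemma real_c: "real_coeffs 4 (SSc 1)"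
  unfolding real_coeffs_def SSc_def
  by (rule always_eventually) (simp add: all4 Dm_def Mm_def L4_def)

lemma realizable_c: assumes "\<zeta> \<ge> 1" shows "realizable 4 2 (SSc \<zeta>)"
  unfolding realizable_def SSc_def using real2[OF w_facts[OF assms]] by blast

lemma mcm_c: assumes "\<zeta> \<ge> 1" shows "mcmillan_degree_is 4 (SSc \<zeta>) 2"
  unfolding mcmillan_degree_is_def using realizable_c[OF assms] no_low[OF ext_c] by blast

lemma IK:
  fixes \<zeta> :: real and s :: complex
  assumes z1: "\<zeta> \<ge> 1" and u: "s + complex_of_real \<zeta> \<noteq> 0" and ij: "i < 4" "j < 4"
  shows "idm i j - mmult 4 (SSc \<zeta> s) (madj (SSc \<zeta> s)) i j
     = complex_of_real (2 * Re s / (cmod (s + complex_of_real \<zeta>))^2)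
       * Km (complex_of_real \<zeta>) (complex_of_real (sqrt (\<zeta>^2 - 1))) i j"
proof -
  let ?z = "complex_of_real \<zeta>" and ?w = "complex_of_real (sqrt (\<zeta>^2 - 1))"
  have cz: "cnj ?z = ?z" and cw: "cnj ?w = ?w" by simp_all
  have ww: "?w * ?w = ?z * ?z - 1" by (rule w_facts[OF z1])
  have "idm i j - mmult 4 (SSc \<zeta> s) (madj (SSc \<zeta> s)) i j
      = (1 / (s + ?z) + cnj (1 / (s + ?z)) - 1 / (s + ?z) * cnj (1 / (s + ?z)) * (2 * ?z)) * Km ?z ?w i j"
    unfolding SSc_def
    by (rule G1[OF DD MD[OF cz cw] DM[OF cz cw] _ ij]) (use MM[OF cz cw ww] in \<open>simp add: mult.assoc\<close>)
  then show ?thesis using gval[OF u] by simp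
qed

lemma inner_c: assumes z1: "\<zeta> \<ge> 1" shows "inner_fun 4 (SSc \<zeta>)"
proof -
  let ?z = "complex_of_real \<zeta>" and ?w = "complex_of_real (sqrt (\<zeta>^2 - 1))"
  have cz: "cnj ?z = ?z" and cw: "cnj ?w = ?w" by simp_all
  have ww: "?w * ?w = ?z * ?z - 1" by (rule w_facts[OF z1])
  have rat: "rational_mfun 4 (SSc \<zeta>)" unfolding rational_mfun_def using realizable_c[OF z1] by blast
  have hol: "\<forall>i<4. \<forall>j<4. (\<lambda>s. SSc \<zeta> s i j) holomorphic_on RHP"
  proof (intro allI impI)
    fix i j :: nat
    have "(\<lambda>s. Dm i j + 1 / (s + ?z) * Mm ?z ?w i j) holomorphic_on RHP"
      using nz z1 by (auto intro!: holomorphic_intros)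
    then show "(\<lambda>s. SSc \<zeta> s i j) holomorphic_on RHP" by (simp add: SSc_def)
  qed
  have herm: "\<forall>i<4. \<forall>j<4. Km ?z ?w i j = cnj (Km ?z ?w j i)" by (rule Kherm[OF cz cw])
  have KK': "\<forall>i<4. \<forall>j<4. mmult 4 (Km ?z ?w) (Km ?z ?w) i j = complex_of_real (2 * \<zeta>) * Km ?z ?w i j"
    using KK[OF ww] by simp
  have le: "le_identity 4 (mmult 4 (SSc \<zeta> s) (madj (SSc \<zeta> s)))" if s: "s \<in> RHP" for s
    unfolding le_identity_def Let_def
  proof (intro allI)
    fix v :: "nat \<Rightarrow> complex"
    let ?g = "2 * Re s / (cmod (s + ?z))^2"
    have u: "s + ?z \<noteq> 0" using nz[OF s] z1 by simp
    have g0: "?g \<ge> 0" using s by (simp add: RHP_def)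
    have "(\<Sum>i<4. \<Sum>j<4. cnj (v i) * (idm i j - mmult 4 (SSc \<zeta> s) (madj (SSc \<zeta> s)) i j) * v j)
        = (\<Sum>i<4. \<Sum>j<4. complex_of_real ?g * (cnj (v i) * Km ?z ?w i j * v j))"
      using IK[OF z1 u] by (intro sum.cong refl) (simp add: algebra_simps)
    also have "\<dots> = complex_of_real ?g * (\<Sum>i<4. \<Sum>j<4. cnj (v i) * Km ?z ?w i j * v j)"
      by (simp add: sum_distrib_left)
    also have "(\<Sum>i<4. \<Sum>j<4. cnj (v i) * Km ?z ?w i j * v j)
        = complex_of_real ((\<Sum>l<4. (cmod (\<Sum>j<4. Km ?z ?w l j * v j))^2) / (2 * \<zeta>))"
      by (rule G2[OF herm KK']) (use z1 in simp)
    finally have q: "(\<Sum>i<4. \<Sum>j<4. cnj (v i) * (idm i j - mmult 4 (SSc \<zeta> s) (madj (SSc \<zeta> s)) i j) * v j)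
        = complex_of_real (?g * ((\<Sum>l<4. (cmod (\<Sum>j<4. Km ?z ?w l j * v j))^2) / (2 * \<zeta>)))" by simp
    have "0 \<le> ?g * ((\<Sum>l<4. (cmod (\<Sum>j<4. Km ?z ?w l j * v j))^2) / (2 * \<zeta>))"
      by (rule mult_nonneg_nonneg[OF g0], intro divide_nonneg_nonneg sum_nonneg) (use z1 in auto)
    then show "(\<Sum>i<4. \<Sum>j<4. cnj (v i) * (idm i j - mmult 4 (SSc \<zeta> s) (madj (SSc \<zeta> s)) i j) * v j) \<in> \<real> \<and>
          0 \<le> Re (\<Sum>i<4. \<Sum>j<4. cnj (v i) * (idm i j - mmult 4 (SSc \<zeta> s) (madj (SSc \<zeta> s)) i j) * v j)"
      unfolding q by simp
  qed
  have un: "mmult 4 (SSc \<zeta> (\<i> * complex_of_real \<omega>)) (madj (SSc \<zeta> (\<i> * complex_of_real \<omega>))) i j = idm i j"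
    if ij: "i < 4" "j < 4" for \<omega> :: real and i j
  proof -
    have u: "\<i> * complex_of_real \<omega> + ?z \<noteq> 0" using z1 by (simp add: complex_eq_iff)
    from IK[OF z1 u ij] show ?thesis by simp
  qed
  show ?thesis unfolding inner_fun_def schur_fun_def using rat hol le un by blast
qed


theorem mainTheorem15:
  fixes \<zeta> :: real and S :: "complex \<Rightarrow> cmat"
  defines "S \<equiv> (\<lambda>s i j. if i = j then 1 / (s + complex_of_real \<zeta>) else 0)"
  shows "(schur_fun 2 S \<longleftrightarrow> \<zeta> \<ge> 1)
     \<and> (\<zeta> \<ge> 1 \<longrightarrow> (\<exists>SS. extends4 SS S \<and> symmetric_fun 4 SS \<and> inner_fun 4 SS
                            \<and> mcmillan_degree_is 4 SS 2))
     \<and> ((\<exists>SS. extends4 SS S \<and> symmetric_fun 4 SS \<and> inner_fun 4 SS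
             \<and> mcmillan_degree_is 4 SS 2 \<and> real_coeffs 4 SS) \<longleftrightarrow> \<zeta> = 1)"
proof (intro conjI impI)
  show "schur_fun 2 S \<longleftrightarrow> \<zeta> \<ge> 1" unfolding S_def by (rule part1)
next
  assume z1: "\<zeta> \<ge> 1"
  show "\<exists>SS. extends4 SS S \<and> symmetric_fun 4 SS \<and> inner_fun 4 SS \<and> mcmillan_degree_is 4 SS 2"
    using ext_c[of \<zeta>] sym_c[of \<zeta>] inner_c[OF z1] mcm_c[OF z1] unfolding S_def by blast
next
  show "(\<exists>SS. extends4 SS S \<and> symmetric_fun 4 SS \<and> inner_fun 4 SS
             \<and> mcmillan_degree_is 4 SS 2 \<and> real_coeffs 4 SS) \<longleftrightarrow> \<zeta> = 1"
  proof
    assume "\<exists>SS. extends4 SS S \<and> symmetric_fun 4 SS \<and> inner_fun 4 SS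
             \<and> mcmillan_degree_is 4 SS 2 \<and> real_coeffs 4 SS"
    then obtain SS where ext: "extends4 SS S" and sym: "symmetric_fun 4 SS" and inn: "inner_fun 4 SS"
      and mc: "mcmillan_degree_is 4 SS 2" and rc: "real_coeffs 4 SS" by blast
    have ext': "extends4 SS (\<lambda>s i j. if i = j then 1 / (s + complex_of_real \<zeta>) else 0)"
      using ext unfolding S_def .
    have z1: "\<zeta> \<ge> 1" using Zlem[OF _ ext'] inn unfolding inner_fun_def by blast
    from mc obtain A B C D where r: "realizes 4 2 A B C D SS"
      unfolding mcmillan_degree_is_def realizable_def by blast
    from R2[OF ext' r] obtain P where
      ev: "\<forall>\<^sub>F s in cofinite. \<forall>i<4. \<forall>j<4. SS s i j = D i j + P i j / (s + complex_of_real \<zeta>)"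
      and low: "D 2 2 = 0" "D 2 3 = 0" "D 3 2 = 0" "D 3 3 = 0" "P 2 2 = 1" "P 2 3 = 0" "P 3 2 = 0" "P 3 3 = 1"
      by blast
    have u: "\<forall>i<4. \<forall>j<4. mmult 4 D (madj D) i j = idm i j \<and> mmult 4 P (madj D) i j = mmult 4 D (madj P) i j
     \<and> complex_of_real \<zeta> * (mmult 4 P (madj D) i j + mmult 4 D (madj P) i j) + mmult 4 P (madj P) i j = 0"
      by (rule U[OF ev inn])
    have sr: "\<forall>i<4. \<forall>j<4. D i j = D j i \<and> P i j = P j i \<and> cnj (D i j) = D i j \<and> cnj (P i j) = P i j"
      by (rule SR[OF ev sym rc])
    have "complex_of_real \<zeta> * complex_of_real \<zeta> = 1"
      by (rule FIN[of D P]; use sr u low in blast)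
    then have "complex_of_real (\<zeta> * \<zeta>) = complex_of_real 1" by simp
    then have zz: "\<zeta> * \<zeta> = 1" by (simp only: of_real_eq_iff)
    have "(\<zeta> - 1) * (\<zeta> + 1) = 0" using zz by (simp add: algebra_simps)
    then show "\<zeta> = 1" using z1 by simp
  next
    assume z: "\<zeta> = 1"
    then show "\<exists>SS. extends4 SS S \<and> symmetric_fun 4 SS \<and> inner_fun 4 SS
             \<and> mcmillan_degree_is 4 SS 2 \<and> real_coeffs 4 SS"
      using ext_c[of 1] sym_c[of 1] inner_c[of 1] mcm_c[of 1] real_c unfolding S_def z by blast
  qed
qed

end
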